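(* Let $G$ be a profinite-$C$ group and let $A$ be a nontrivial abelian closed normal subgroup of $G$. Then $A$ is an internal cartesian product of $G$-invariant subgroups of $A$ of prime order.
   Context: A permutable complement of a subgroup $H$ of a group $G$ is a subgroup $K$ with $G=HK$ and $H\cap K=1$. A profinite group $G$ is a profinite-$C$ group if every closed subgroup of $G$ has a closed permutable complement in $G$. A profinite group $A$ is the internal cartesian product of a family $\{H_i\}_{i\in I}$ of its subgroups if: each $H_i$ is a closed normal subgroup of $A$; $A$ is the topological closure of $\langle H_i\mid i\in I\rangle$; and $\bigcap_{i\in I}\overline{\langle H_j\mid j\ne i\rangle}=1$. *)

theory Defs
  imports "HOL-Analysis.Analysis" "HOL-Algebra.Algebra"
begin

definition topological_group :: "('a, 'b) monoid_scheme \<Rightarrow> 'a topology \<Rightarrow> bool" where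
  "topological_group G T \<longleftrightarrow> group G \<and> topspace T = carrier G \<and>
     continuous_map (prod_topology T T) T (\<lambda>(x, y). x \<otimes>\<^bsub>G\<^esub> y) \<and>
     continuous_map T T (\<lambda>x. inv\<^bsub>G\<^esub> x)"

definition totally_disconnected_space :: "'a topology \<Rightarrow> bool" where
  "totally_disconnected_space T \<longleftrightarrow>
     (\<forall>x \<in> topspace T. connected_component_of_set T x = {x})"

definition profinite_group :: "('a, 'b) monoid_scheme \<Rightarrow> 'a topology \<Rightarrow> bool" where
  "profinite_group G T \<longleftrightarrow> topological_group G T \<and> compact_space T \<and>
     Hausdorff_space T \<and> totally_disconnected_space T"

definition closed_subgroup :: "('a, 'b) monoid_scheme \<Rightarrow> 'a topology \<Rightarrow> 'a set \<Rightarrow> bool" where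
  "closed_subgroup G T H \<longleftrightarrow> subgroup H G \<and> closedin T H"

definition permutable_complement :: "('a, 'b) monoid_scheme \<Rightarrow> 'a set \<Rightarrow> 'a set \<Rightarrow> bool" where
  "permutable_complement G H K \<longleftrightarrow> subgroup K G \<and>
     H <#>\<^bsub>G\<^esub> K = carrier G \<and> H \<inter> K = {\<one>\<^bsub>G\<^esub>}"

definition profinite_C_group :: "('a, 'b) monoid_scheme \<Rightarrow> 'a topology \<Rightarrow> bool" where
  "profinite_C_group G T \<longleftrightarrow> profinite_group G T \<and>
     (\<forall>H. closed_subgroup G T H \<longrightarrow>
        (\<exists>K. closed_subgroup G T K \<and> permutable_complement G H K))"

definition internal_cartesian_product ::
  "('a, 'b) monoid_scheme \<Rightarrow> 'a topology \<Rightarrow> 'a set \<Rightarrow> 'i set \<Rightarrow> ('i \<Rightarrow> 'a set) \<Rightarrow> bool" where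
  "internal_cartesian_product G T A I H \<longleftrightarrow>
     (\<forall>i\<in>I. closedin T (H i) \<and> normal (H i) (G\<lparr>carrier := A\<rparr>)) \<and>
     A = T closure_of (generate G (\<Union>i\<in>I. H i)) \<and>
     (\<Inter>i\<in>I. T closure_of (generate G (\<Union>j\<in>I - {i}. H j))) = {\<one>\<^bsub>G\<^esub>}"

definition G_invariant :: "('a, 'b) monoid_scheme \<Rightarrow> 'a set \<Rightarrow> bool" where
  "G_invariant G H \<longleftrightarrow> (\<forall>g\<in>carrier G. (\<lambda>h. g \<otimes>\<^bsub>G\<^esub> h \<otimes>\<^bsub>G\<^esub> inv\<^bsub>G\<^esub> g) ` H = H)"

end

theory Submission
  imports Defs
begin

locale ptg =
  fixes G :: "('a, 'b) monoid_scheme" (structure) and T :: "'a topology"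
  assumes pg: "profinite_group G T"
begin

sublocale group G
  using pg unfolding profinite_group_def topological_group_def by auto

lemma top: "topspace T = carrier G"
  using pg unfolding profinite_group_def topological_group_def by auto

lemma cmult: "continuous_map (prod_topology T T) T (\<lambda>(x, y). x \<otimes> y)"
  using pg unfolding profinite_group_def topological_group_def by auto

lemma cinv: "continuous_map T T (\<lambda>x. inv x)"
  using pg unfolding profinite_group_def topological_group_def by auto

lemma cpt: "compact_space T"
  using pg unfolding profinite_group_def by auto

lemma haus: "Hausdorff_space T"
  using pg unfolding profinite_group_def by auto

lemma cm_mult:
  assumes "continuous_map Z T f" "continuous_map Z T g"
  shows "continuous_map Z T (\<lambda>x. f x \<otimes> g x)"
proof -
  have "continuous_map Z T ((\<lambda>(x, y). x \<otimes> y) \<circ> (\<lambda>x. (f x, g x)))"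
    by (intro continuous_map_compose[OF continuous_map_pairedI[OF assms] cmult])
  then show ?thesis by (simp add: o_def)
qed

lemma cm_inv:
  assumes "continuous_map Z T f"
  shows "continuous_map Z T (\<lambda>x. inv (f x))"
proof -
  have "continuous_map Z T ((\<lambda>x. inv x) \<circ> f)"
    by (intro continuous_map_compose[OF assms cinv])
  then show ?thesis by (simp add: o_def)
qed

lemma cm_const: "a \<in> carrier G \<Longrightarrow> continuous_map Z T (\<lambda>x. a)"
  by (simp add: top)

lemma cm_lmult: "a \<in> carrier G \<Longrightarrow> continuous_map T T (\<lambda>x. a \<otimes> x)"
  by (rule cm_mult[OF cm_const continuous_map_id[unfolded id_def]])

lemma lmult_image:
  assumes "a \<in> carrier G" "U \<subseteq> carrier G"
  shows "(\<lambda>x. a \<otimes> x) ` U = {x \<in> topspace T. inv a \<otimes> x \<in> U}"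
proof
  show "(\<lambda>x. a \<otimes> x) ` U \<subseteq> {x \<in> topspace T. inv a \<otimes> x \<in> U}"
    using assms by (auto simp: top m_assoc[symmetric])
  show "{x \<in> topspace T. inv a \<otimes> x \<in> U} \<subseteq> (\<lambda>x. a \<otimes> x) ` U"
  proof
    fix x assume "x \<in> {x \<in> topspace T. inv a \<otimes> x \<in> U}"
    then have x: "x \<in> carrier G" "inv a \<otimes> x \<in> U" by (auto simp: top)
    then have "x = a \<otimes> (inv a \<otimes> x)" using assms by (simp add: m_assoc[symmetric])
    then show "x \<in> (\<lambda>x. a \<otimes> x) ` U" using x by blast
  qed
qed

lemma open_lmult:
  assumes "a \<in> carrier G" "openin T U"
  shows "openin T ((\<lambda>x. a \<otimes> x) ` U)"
proof -
  have "U \<subseteq> carrier G" using openin_subset[OF assms(2)] top by simp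
  then show ?thesis
    using lmult_image[OF assms(1)] openin_continuous_map_preimage[OF cm_lmult[of "inv a"] assms(2)] assms(1)
    by simp
qed

lemma closed_lmult:
  assumes "a \<in> carrier G" "closedin T U"
  shows "closedin T ((\<lambda>x. a \<otimes> x) ` U)"
proof -
  have "U \<subseteq> carrier G" using closedin_subset[OF assms(2)] top by simp
  then show ?thesis
    using lmult_image[OF assms(1)] closedin_continuous_map_preimage[OF cm_lmult[of "inv a"] assms(2)] assms(1)
    by simp
qed

lemma t1: "t1_space T"
  using haus Hausdorff_imp_t1_space by blast

lemma closed_finite: "finite S \<Longrightarrow> S \<subseteq> carrier G \<Longrightarrow> closedin T S"
  using t1_space_closedin_finite[THEN iffD1, OF t1] top by simp

lemma closed_one: "closedin T {\<one>}"
  by (rule closed_finite) auto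

lemma clopen_sep:
  assumes d: "d \<in> carrier G" "d \<noteq> \<one>"
  shows "\<exists>C. closedin T C \<and> openin T C \<and> \<one> \<in> C \<and> d \<notin> C"
proof -
  have tds: "totally_disconnected_space T" using pg unfolding profinite_group_def by simp
  have td: "connected_component_of_set T \<one> = {\<one>}"
    using tds top unfolding totally_disconnected_space_def by simp
  have q: "quasi_component_of T \<one> = connected_component_of T \<one>"
    by (rule quasi_eq_connected_component_of) (simp add: cpt haus)
  have "\<not> quasi_component_of T \<one> d"
  proof
    assume "quasi_component_of T \<one> d"
    then have "d \<in> connected_component_of_set T \<one>" using q by simp
    then show False using td d by simp
  qed
  then obtain S where S: "closedin T S" "openin T S" "\<not> (\<one> \<in> S \<longleftrightarrow> d \<in> S)"
    using d top unfolding quasi_component_of_def by auto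
  show ?thesis
  proof (cases "\<one> \<in> S")
    case True then show ?thesis using S by blast
  next
    case False
    have "closedin T (topspace T - S)" "openin T (topspace T - S)"
      using S by (auto intro: openin_diff closedin_diff)
    then show ?thesis using S d top False
      by (intro exI[of _ "topspace T - S"]) auto
  qed
qed

end


context ptg begin

lemma inv_cancel_l [simp]: "x \<in> carrier G \<Longrightarrow> y \<in> carrier G \<Longrightarrow> inv x \<otimes> (x \<otimes> y) = y"
  by (simp add: m_assoc[symmetric])

lemma inv_cancel_r [simp]: "x \<in> carrier G \<Longrightarrow> y \<in> carrier G \<Longrightarrow> x \<otimes> (inv x \<otimes> y) = y"
  by (simp add: m_assoc[symmetric])

lemma conj_inv: "g \<in> carrier G \<Longrightarrow> q \<in> carrier G \<Longrightarrow> inv (g \<otimes> q \<otimes> inv g) = g \<otimes> inv q \<otimes> inv g"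
  by (simp add: inv_mult_group m_assoc)

lemma conj_mult: "g \<in> carrier G \<Longrightarrow> x \<in> carrier G \<Longrightarrow> y \<in> carrier G \<Longrightarrow>
   g \<otimes> (x \<otimes> y) \<otimes> inv g = (g \<otimes> x \<otimes> inv g) \<otimes> (g \<otimes> y \<otimes> inv g)"
proof -
  assume a: "g \<in> carrier G" "x \<in> carrier G" "y \<in> carrier G"
  then have "(g \<otimes> x \<otimes> inv g) \<otimes> (g \<otimes> y \<otimes> inv g) = g \<otimes> x \<otimes> (inv g \<otimes> g) \<otimes> y \<otimes> inv g"
    by (simp add: m_assoc)
  also have "\<dots> = g \<otimes> x \<otimes> y \<otimes> inv g" using a by simp
  finally show ?thesis using a by (simp add: m_assoc)
qed

lemma conj_conj: "g \<in> carrier G \<Longrightarrow> h \<in> carrier G \<Longrightarrow> q \<in> carrier G \<Longrightarrow>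
   g \<otimes> (h \<otimes> q \<otimes> inv h) \<otimes> inv g = (g \<otimes> h) \<otimes> q \<otimes> inv (g \<otimes> h)"
  by (simp add: m_assoc inv_mult_group)

lemma open_normal_subgroup:
  assumes d: "d \<in> carrier G" "d \<noteq> \<one>"
  shows "\<exists>V. subgroup V G \<and> openin T V \<and> (\<forall>g\<in>carrier G. \<forall>v\<in>V. g \<otimes> v \<otimes> inv g \<in> V) \<and> d \<notin> V"
proof -
  obtain C where C: "closedin T C" "openin T C" "\<one> \<in> C" "d \<notin> C" using clopen_sep d by blast
  have Cc: "C \<subseteq> carrier G" using openin_subset C top by auto
  define f where "f = (\<lambda>z::('a \<times> 'a) \<times> 'a. fst (fst z) \<otimes> (snd (fst z) \<otimes> snd z \<otimes> inv (snd (fst z))))"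
  define P where "P = prod_topology (prod_topology T T) T"
  have h1: "continuous_map P T (\<lambda>z. fst (fst z))"
    unfolding P_def using continuous_map_compose[OF continuous_map_fst continuous_map_fst] by (simp add: o_def)
  have h2: "continuous_map P T (\<lambda>z. snd (fst z))"
    unfolding P_def using continuous_map_compose[OF continuous_map_fst continuous_map_snd] by (simp add: o_def)
  have h3: "continuous_map P T (\<lambda>z. snd z)"
    unfolding P_def by (rule continuous_map_snd)
  have fc: "continuous_map P T f"
    unfolding f_def by (rule cm_mult[OF h1 cm_mult[OF cm_mult[OF h2 h3] cm_inv[OF h2]]])
  define W where "W = {z \<in> topspace P. f z \<in> C}"
  have Wo: "openin P W" unfolding W_def by (rule openin_continuous_map_preimage[OF fc C(2)])
  have "compactin T C" using closedin_compact_space[OF cpt C(1)] .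
  moreover have "compactin T (carrier G)" using cpt top by (simp add: compact_space_def)
  ultimately have K: "compactin (prod_topology T T) (C \<times> carrier G)"
    by (simp add: compactin_Times)
  have KW: "(C \<times> carrier G) \<times> {\<one>} \<subseteq> W"
  proof
    fix z assume "z \<in> (C \<times> carrier G) \<times> {\<one>}"
    then obtain c g where z: "z = ((c, g), \<one>)" "c \<in> C" "g \<in> carrier G" by auto
    have "f z = c" using z Cc by (auto simp: f_def)
    then show "z \<in> W" using z Cc unfolding W_def P_def by (auto simp: top)
  qed
  obtain U Q0 where UQ: "openin (prod_topology T T) U" "openin T Q0" "C \<times> carrier G \<subseteq> U" "\<one> \<in> Q0" "U \<times> Q0 \<subseteq> W"
    using tube_lemma_left[OF Wo[unfolded P_def] K _ KW[unfolded P_def]] top by auto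
  have Q0c: "Q0 \<subseteq> carrier G" using openin_subset UQ(2) top by auto
  have Q0p: "c \<otimes> (g \<otimes> q \<otimes> inv g) \<in> C" if "c \<in> C" "g \<in> carrier G" "q \<in> Q0" for c g q
  proof -
    have "((c, g), q) \<in> W" using UQ(3,5) that by blast
    then show ?thesis unfolding W_def f_def by simp
  qed
  define Q where "Q = Q0 \<inter> {q \<in> topspace T. inv q \<in> Q0}"
  have Qo: "openin T Q" unfolding Q_def
    by (intro openin_Int UQ(2) openin_continuous_map_preimage[OF cinv UQ(2)])
  have Qc: "Q \<subseteq> carrier G" using Q0c Q_def by auto
  have Q1: "\<one> \<in> Q" using UQ(4) top by (simp add: Q_def)
  define S where "S = {g \<otimes> q \<otimes> inv g | g q. g \<in> carrier G \<and> q \<in> Q}"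
  have Sc: "S \<subseteq> carrier G" using Qc unfolding S_def by auto
  define V where "V = generate G S"
  have Vsub: "subgroup V G" unfolding V_def by (rule generate_is_subgroup[OF Sc])
  have QV: "Q \<subseteq> V"
  proof
    fix q assume q: "q \<in> Q"
    then have "q = \<one> \<otimes> q \<otimes> inv \<one>" using Qc by auto
    then have "q \<in> S" unfolding S_def using q by blast
    then show "q \<in> V" unfolding V_def by (rule generate.incl)
  qed
  have VC0: "\<forall>c\<in>C. c \<otimes> x \<in> C" if "x \<in> V" for x
    using that unfolding V_def
  proof (induct x rule: generate.induct)
    case one
    then show ?case using Cc by auto
  next
    case (incl h)
    then show ?case using Q0p unfolding S_def Q_def by auto
  next
    case (inv h)
    then obtain g q where gq: "h = g \<otimes> q \<otimes> inv g" "g \<in> carrier G" "q \<in> Q" unfolding S_def by auto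
    have "inv q \<in> Q0" using gq(3) unfolding Q_def by auto
    then show ?case using gq Q0p conj_inv Qc by auto
  next
    case (eng h1 h2)
    have "h1 \<in> carrier G" "h2 \<in> carrier G"
      using eng(1,3) generate_in_carrier[OF Sc] by auto
    show ?case
    proof
      fix c assume c: "c \<in> C"
      then have "c \<in> carrier G" using Cc by auto
      then have "c \<otimes> (h1 \<otimes> h2) = (c \<otimes> h1) \<otimes> h2" using \<open>h1 \<in> carrier G\<close> \<open>h2 \<in> carrier G\<close>
        by (simp add: m_assoc)
      then show "c \<otimes> (h1 \<otimes> h2) \<in> C" using eng c by auto
    qed
  qed
  have VC: "V \<subseteq> C"
  proof
    fix x assume "x \<in> V"
    then have "\<one> \<otimes> x \<in> C" using VC0 C(3) by simp
    moreover have "x \<in> carrier G" using subgroup.mem_carrier[OF Vsub \<open>x \<in> V\<close>] .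
    ultimately show "x \<in> C" by simp
  qed
  have conjS: "g \<otimes> h \<otimes> inv g \<in> S" if g: "g \<in> carrier G" and h: "h \<in> S" for g h
  proof -
    obtain g' q where gq: "h = g' \<otimes> q \<otimes> inv g'" "g' \<in> carrier G" "q \<in> Q"
      using h unfolding S_def by auto
    have qc: "q \<in> carrier G" using gq(3) Qc by auto
    have "g \<otimes> h \<otimes> inv g = (g \<otimes> g') \<otimes> q \<otimes> inv (g \<otimes> g')"
      using gq(1,2) g qc conj_conj by simp
    moreover have "g \<otimes> g' \<in> carrier G" using g gq(2) by simp
    ultimately show ?thesis unfolding S_def using gq(3) by blast
  qed
  have Vn: "\<forall>g\<in>carrier G. g \<otimes> x \<otimes> inv g \<in> V" if "x \<in> V" for x
    using that unfolding V_def
  proof (induct x rule: generate.induct)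
    case one
    then show ?case by (simp add: generate.one)
  next
    case (incl h)
    then show ?case using conjS by (simp add: generate.incl)
  next
    case (inv h)
    show ?case
    proof
      fix g assume g: "g \<in> carrier G"
      have hc: "h \<in> carrier G" using inv Sc by auto
      have "g \<otimes> h \<otimes> inv g \<in> generate G S"
        using conjS[OF g inv(1)] by (rule generate.incl)
      then have "inv (g \<otimes> h \<otimes> inv g) \<in> generate G S"
        using Vsub unfolding V_def by (rule subgroup.m_inv_closed[rotated])
      moreover have "inv (g \<otimes> h \<otimes> inv g) = g \<otimes> inv h \<otimes> inv g" using conj_inv g hc by simp
      ultimately show "g \<otimes> inv h \<otimes> inv g \<in> generate G S" by simp
    qed
  next
    case (eng h1 h2)
    have "h1 \<in> carrier G" "h2 \<in> carrier G"
      using eng(1,3) generate_in_carrier[OF Sc] by auto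
    then show ?case using eng conj_mult by (simp add: generate.eng)
  qed
  have Vo: "openin T V"
  proof (subst openin_subopen, intro ballI)
    fix x assume x: "x \<in> V"
    have xc: "x \<in> carrier G" using subgroup.mem_carrier[OF Vsub x] .
    have "openin T ((\<lambda>y. x \<otimes> y) ` Q)" by (rule open_lmult[OF xc Qo])
    moreover have "x \<in> (\<lambda>y. x \<otimes> y) ` Q" using Q1 xc image_eqI[of x "\<lambda>y. x \<otimes> y" \<one> Q] by simp
    moreover have "(\<lambda>y. x \<otimes> y) ` Q \<subseteq> V" using QV x subgroup.m_closed[OF Vsub] by auto
    ultimately show "\<exists>T'. openin T T' \<and> x \<in> T' \<and> T' \<subseteq> V" by blast
  qed
  show ?thesis using Vsub Vo Vn VC C(4) by blast
qed

lemma closed_between: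
  assumes V: "subgroup V G" "openin T V" and A: "closedin T A" "subgroup A G"
    and S: "subgroup S G" "A \<inter> V \<subseteq> S" "S \<subseteq> A"
  shows "closedin T S"
proof -
  have eq: "topspace T - S = (topspace T - A) \<union> \<Union>((\<lambda>a. (\<lambda>x. a \<otimes> x) ` V) ` (A - S))"
  proof
    show "topspace T - S \<subseteq> (topspace T - A) \<union> \<Union>((\<lambda>a. (\<lambda>x. a \<otimes> x) ` V) ` (A - S))"
    proof
      fix x assume x: "x \<in> topspace T - S"
      show "x \<in> (topspace T - A) \<union> \<Union>((\<lambda>a. (\<lambda>x. a \<otimes> x) ` V) ` (A - S))"
      proof (cases "x \<in> A")
        case True
        have "x = x \<otimes> \<one>" using x top by simp
        then have "x \<in> (\<lambda>y. x \<otimes> y) ` V" using subgroup.one_closed[OF V(1)] by blast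
        then show ?thesis using True x by blast
      qed (use x in blast)
    qed
    show "(topspace T - A) \<union> \<Union>((\<lambda>a. (\<lambda>x. a \<otimes> x) ` V) ` (A - S)) \<subseteq> topspace T - S"
    proof
      fix y assume y: "y \<in> (topspace T - A) \<union> \<Union>((\<lambda>a. (\<lambda>x. a \<otimes> x) ` V) ` (A - S))"
      show "y \<in> topspace T - S"
      proof (cases "y \<in> topspace T - A")
        case True then show ?thesis using S(3) by auto
      next
        case False
        then obtain a v where av: "a \<in> A" "a \<notin> S" "v \<in> V" "y = a \<otimes> v" using y by auto
        have ac: "a \<in> carrier G" using av(1) A(2) by (rule subgroup.mem_carrier[rotated])
        have vc: "v \<in> carrier G" using av(3) V(1) by (rule subgroup.mem_carrier[rotated])
        have "y \<notin> S"
        proof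
          assume yS: "y \<in> S"
          then have "y \<in> A" using S by blast
          have "v = inv a \<otimes> y" using av(4) ac vc by simp
          then have "v \<in> A" using \<open>y \<in> A\<close> av A(2) subgroup.m_closed subgroup.m_inv_closed by metis
          then have "v \<in> S" using av S by blast
          have "a = y \<otimes> inv v" using av(4) ac vc by (simp add: m_assoc)
          then have "a \<in> S" using yS \<open>v \<in> S\<close> S(1) subgroup.m_closed subgroup.m_inv_closed by metis
          then show False using av by blast
        qed
        then show ?thesis using ac vc av top by auto
      qed
    qed
  qed
  have "openin T (topspace T - S)"
    unfolding eq
  proof (intro openin_Un openin_Union)
    show "openin T (topspace T - A)" using A(1) by (simp add: closedin_def)
    fix Y0 assume "Y0 \<in> (\<lambda>a. (\<otimes>) a ` V) ` (A - S)"
    then obtain a where a: "a \<in> A" "Y0 = (\<otimes>) a ` V" by auto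
    have "a \<in> carrier G" using a(1) A(2) by (rule subgroup.mem_carrier[rotated])
    then show "openin T Y0" using open_lmult[OF _ V(2)] a by simp
  qed
  moreover have "S \<subseteq> topspace T" using S(1) top subgroup.subset by auto
  ultimately show ?thesis unfolding closedin_def by simp
qed

end


definition ginv :: "('a, 'b) monoid_scheme \<Rightarrow> 'a set \<Rightarrow> bool" where
  "ginv G L \<longleftrightarrow> (\<forall>g\<in>carrier G. \<forall>l\<in>L. g \<otimes>\<^bsub>G\<^esub> l \<otimes>\<^bsub>G\<^esub> inv\<^bsub>G\<^esub> g \<in> L)"

context group begin

lemma pow_in_subgroup: "subgroup N G \<Longrightarrow> x \<in> N \<Longrightarrow> x [^] (k::nat) \<in> N"
proof (induct k)
  case 0 then show ?case by (simp add: subgroup.one_closed)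
next
  case (Suc k)
  have "x \<in> carrier G" using subgroup.mem_carrier[OF Suc(2) Suc(3)] .
  then have "x [^] Suc k = x [^] k \<otimes> x" by simp
  then show ?case using subgroup.m_closed[OF Suc(2) Suc(1)[OF Suc(2) Suc(3)] Suc(3)] by simp
qed

lemma prime_card_if_no_subgroups:
  assumes N: "subgroup N G" "finite N" "N \<noteq> {\<one>}"
    and min: "\<And>M. subgroup M G \<Longrightarrow> M \<subseteq> N \<Longrightarrow> M = {\<one>} \<or> M = N"
  shows "Factorial_Ring.prime (card N)"
proof -
  have one: "\<one> \<in> N" using subgroup.one_closed[OF N(1)] .
  obtain x where x: "x \<in> N" "x \<noteq> \<one>" using N(3) one by blast
  have xc: "x \<in> carrier G" using subgroup.mem_carrier[OF N(1) x(1)] .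
  have gsub: "generate G {x} \<subseteq> N" using generate_subgroup_incl[of "{x}" N] x N(1) by simp
  have "x \<in> generate G {x}" by (simp add: generate.incl)
  then have "generate G {x} \<noteq> {\<one>}" using x(2) by blast
  then have gN: "generate G {x} = N" using min[OF generate_is_subgroup gsub] xc by auto
  define n where "n = ord x"
  have cardN: "card N = n" using generate_pow_card[OF xc] gN n_def by simp
  have npos: "n > 0" using cardN N(2) one card_gt_0_iff by fastforce
  have n1: "n \<noteq> 1" using ord_eq_1[OF xc] x(2) n_def by simp
  have "Factorial_Ring.prime n"
    unfolding prime_nat_iff
  proof (intro conjI allI impI)
    show "1 < n" using npos n1 by simp
    fix m assume m: "m dvd n"
    show "m = 1 \<or> m = n"
    proof (rule ccontr)
      assume nm: "\<not> (m = 1 \<or> m = n)"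
      have mpos: "m > 0" using m npos by (cases "m = 0") auto
      have nm_eq: "n = m * (n div m)" using m by simp
      define y where "y = x [^] m"
      have yc: "y \<in> carrier G" using xc y_def by simp
      have yN: "y \<in> N" using pow_in_subgroup[OF N(1) x(1)] y_def by simp
      have "gcd n m = m" using m by (simp add: gcd_nat.absorb2)
      then have oy: "ord y = n div m" using ord_pow_gen[OF xc, of m] mpos y_def n_def by simp
      have ysub: "generate G {y} \<subseteq> N" using generate_subgroup_incl[of "{y}" N] yN N(1) by simp
      have cy: "card (generate G {y}) = n div m" using generate_pow_card[OF yc] oy by simp
      from min[OF generate_is_subgroup ysub] yc
      have "generate G {y} = {\<one>} \<or> generate G {y} = N" by auto
      then show False
      proof
        assume "generate G {y} = {\<one>}"
        then have "n div m = 1" using cy by simp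
        then have "n = m" using nm_eq by simp
        then show False using nm by simp
      next
        assume "generate G {y} = N"
        then have "n div m = n" using cy cardN by simp
        then have "m = 1" using npos mpos m
          using nm_eq by simp
        then show False using nm by simp
      qed
    qed
  qed
  then show ?thesis using cardN by simp
qed

lemma prime_sub:
  assumes N: "subgroup N G" "Factorial_Ring.prime (card N)" and Z: "subgroup Z G" "Z \<subseteq> N"
  shows "Z = {\<one>} \<or> Z = N"
proof -
  have fin: "finite N" using N(2) card_ge_0_finite prime_gt_0_nat by blast
  have finZ: "finite Z" using finite_subset[OF Z(2) fin] .
  have grp: "group (G\<lparr>carrier := N\<rparr>)" using subgroup_imp_group[OF N(1)] .
  have sZ: "subgroup Z (G\<lparr>carrier := N\<rparr>)" using subgroup_incl[OF Z(1) N(1) Z(2)] .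
  have "card (rcosets\<^bsub>G\<lparr>carrier := N\<rparr>\<^esub> Z) * card Z = order (G\<lparr>carrier := N\<rparr>)"
    using group.lagrange[OF grp sZ] .
  moreover have "order (G\<lparr>carrier := N\<rparr>) = card N" by (simp add: order_def)
  ultimately have "card N = card (rcosets\<^bsub>G\<lparr>carrier := N\<rparr>\<^esub> Z) * card Z" by simp
  moreover have "card Z dvd card (rcosets\<^bsub>G\<lparr>carrier := N\<rparr>\<^esub> Z) * card Z" by (rule dvd_triv_right)
  ultimately have "card Z dvd card N" by simp
  then have "card Z = 1 \<or> card Z = card N" using N(2) prime_nat_iff by blast
  then show ?thesis
  proof
    assume "card Z = 1"
    then obtain z where z: "Z = {z}" using card_1_singletonE by blast
    moreover have "\<one> \<in> Z" using subgroup.one_closed[OF Z(1)] .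
    ultimately show ?thesis by simp
  next
    assume "card Z = card N"
    then show ?thesis using card_subset_eq[OF fin Z(2)] by simp
  qed
qed

end

locale setting = ptg G T for G :: "('a, 'b) monoid_scheme" (structure) and T +
  fixes A :: "'a set"
  assumes Cprop: "\<And>H. closed_subgroup G T H \<Longrightarrow> \<exists>K. closed_subgroup G T K \<and> permutable_complement G H K"
    and nA: "A \<lhd> G" and cA: "closedin T A"
    and ab: "\<And>x y. x \<in> A \<Longrightarrow> y \<in> A \<Longrightarrow> x \<otimes> y = y \<otimes> x"
begin

lemma subA: "subgroup A G" using nA normal_imp_subgroup by blast

lemma Ac: "A \<subseteq> carrier G" using subA subgroup.subset by blast

lemma inA: "a \<in> A \<Longrightarrow> a \<in> carrier G" using Ac by blast

lemma nA2: "g \<in> carrier G \<Longrightarrow> a \<in> A \<Longrightarrow> g \<otimes> a \<otimes> inv g \<in> A"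
  using normal.inv_op_closed2[OF nA] by blast

lemma ginv_Ginv:
  assumes "L \<subseteq> carrier G" "ginv G L"
  shows "G_invariant G L"
  unfolding G_invariant_def
proof (intro ballI equalityI subsetI)
  fix g x assume g: "g \<in> carrier G" and x: "x \<in> (\<lambda>h. g \<otimes> h \<otimes> inv g) ` L"
  then show "x \<in> L" using assms(2) unfolding ginv_def by auto
next
  fix g l assume g: "g \<in> carrier G" and l: "l \<in> L"
  have lc: "l \<in> carrier G" using l assms(1) by auto
  have ig: "inv g \<in> carrier G" using g by simp
  have "inv g \<otimes> l \<otimes> inv (inv g) \<in> L" using assms(2) ig l unfolding ginv_def by blast
  moreover have "l = g \<otimes> (inv g \<otimes> l \<otimes> inv (inv g)) \<otimes> inv g" using g lc by (simp add: m_assoc)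
  ultimately show "l \<in> (\<lambda>h. g \<otimes> h \<otimes> inv g) ` L" by (rule image_eqI[rotated])
qed

lemma complement:
  assumes M: "closedin T M" "subgroup M G" "M \<subseteq> A"
  shows "\<exists>L. closedin T L \<and> subgroup L G \<and> L \<subseteq> A \<and> ginv G L \<and> M \<inter> L = {\<one>} \<and>
             (\<forall>a\<in>A. \<exists>m\<in>M. \<exists>l\<in>L. a = m \<otimes> l)"
proof -
  obtain K where K: "closedin T K" "subgroup K G" "M <#> K = carrier G" "M \<inter> K = {\<one>}"
    using Cprop[of M] M unfolding closed_subgroup_def permutable_complement_def by auto
  have dec: "\<exists>m\<in>M. \<exists>k\<in>K. g = m \<otimes> k" if "g \<in> carrier G" for g
  proof -
    from K(3) that have "g \<in> M <#> K" by simp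
    then show ?thesis unfolding set_mult_def by blast
  qed
  define L where "L = A \<inter> K"
  have Lc: "closedin T L" unfolding L_def using cA K(1) by (rule closedin_Int)
  have Ls: "subgroup L G" unfolding L_def using subgroups_Inter_pair[OF subA K(2)] .
  have hML: "M \<inter> L = {\<one>}"
  proof
    show "M \<inter> L \<subseteq> {\<one>}" using K(4) L_def by auto
    have "\<one> \<in> M" "\<one> \<in> L" using subgroup.one_closed[OF M(2)] subgroup.one_closed[OF Ls] by auto
    then show "{\<one>} \<subseteq> M \<inter> L" by auto
  qed
  have decA: "\<exists>m\<in>M. \<exists>l\<in>L. a = m \<otimes> l" if a: "a \<in> A" for a
  proof -
    obtain m k where mk: "m \<in> M" "k \<in> K" "a = m \<otimes> k" using dec[OF inA[OF a]] by blast
    have mA: "m \<in> A" using mk(1) M(3) by auto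
    have kc: "k \<in> carrier G" using subgroup.mem_carrier[OF K(2) mk(2)] .
    have "k = inv m \<otimes> a" using mk(3) inA[OF mA] kc by simp
    moreover have "inv m \<otimes> a \<in> A" using subgroup.m_closed[OF subA subgroup.m_inv_closed[OF subA mA] a] .
    ultimately have "k \<in> A" by simp
    then show ?thesis using mk unfolding L_def by blast
  qed
  have gi: "ginv G L"
    unfolding ginv_def
  proof (intro ballI)
    fix g l assume g: "g \<in> carrier G" and l: "l \<in> L"
    obtain m k where mk: "m \<in> M" "k \<in> K" "g = m \<otimes> k" using dec[OF g] by blast
    have mA: "m \<in> A" using mk(1) M(3) by auto
    have mc: "m \<in> carrier G" using inA[OF mA] .
    have kc: "k \<in> carrier G" using subgroup.mem_carrier[OF K(2) mk(2)] .
    have lA: "l \<in> A" "l \<in> K" using l L_def by auto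
    have lc: "l \<in> carrier G" using inA[OF lA(1)] .
    define z where "z = k \<otimes> l \<otimes> inv k"
    have zA: "z \<in> A" using nA2[OF kc lA(1)] z_def by simp
    have zK: "z \<in> K" using z_def subgroup.m_closed[OF K(2) subgroup.m_closed[OF K(2) mk(2) lA(2)] subgroup.m_inv_closed[OF K(2) mk(2)]] by simp
    have zc: "z \<in> carrier G" using inA[OF zA] .
    have "g \<otimes> l \<otimes> inv g = m \<otimes> z \<otimes> inv m"
      using conj_conj[OF mc kc lc] mk(3) z_def by simp
    also have "\<dots> = z \<otimes> m \<otimes> inv m" using ab[OF mA zA] by simp
    also have "\<dots> = z" using zc mc by (simp add: m_assoc)
    finally show "g \<otimes> l \<otimes> inv g \<in> L" using zA zK L_def by simp
  qed
  have "L \<subseteq> A" using L_def by auto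
  then show ?thesis using Lc Ls gi hML decA by blast
qed

end


context setting begin

definition good :: "'a set \<Rightarrow> bool" where
  "good L \<longleftrightarrow> closedin T L \<and> subgroup L G \<and> L \<subseteq> A \<and> ginv G L \<and>
     (\<exists>N. subgroup N G \<and> N \<subseteq> A \<and> Factorial_Ring.prime (card N) \<and> N \<inter> L = {\<one>} \<and>
          (\<forall>a\<in>A. \<exists>n\<in>N. \<exists>l\<in>L. a = n \<otimes> l))"

lemma prod_subgroup:
  assumes L: "subgroup L G" "L \<subseteq> A" and Y: "subgroup Y G" "Y \<subseteq> A"
  shows "subgroup {l \<otimes> y | l y. l \<in> L \<and> y \<in> Y} G"
proof (rule subgroupI)
  show "{l \<otimes> y | l y. l \<in> L \<and> y \<in> Y} \<subseteq> carrier G"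
    using L Y Ac by auto
  have "\<one> \<otimes> \<one> \<in> {l \<otimes> y | l y. l \<in> L \<and> y \<in> Y}"
    using subgroup.one_closed[OF L(1)] subgroup.one_closed[OF Y(1)] by blast
  then show "{l \<otimes> y | l y. l \<in> L \<and> y \<in> Y} \<noteq> {}" by blast
next
  fix a assume "a \<in> {l \<otimes> y | l y. l \<in> L \<and> y \<in> Y}"
  then obtain l y where ly: "a = l \<otimes> y" "l \<in> L" "y \<in> Y" by blast
  have lA: "l \<in> A" and yA: "y \<in> A" using ly L Y by auto
  have "inv a = inv y \<otimes> inv l" using ly inA[OF lA] inA[OF yA] by (simp add: inv_mult_group)
  also have "\<dots> = inv l \<otimes> inv y"
    using ab subgroup.m_inv_closed[OF subA lA] subgroup.m_inv_closed[OF subA yA] by simp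
  finally have "inv a = inv l \<otimes> inv y" .
  moreover have "inv l \<in> L" "inv y \<in> Y"
    using subgroup.m_inv_closed[OF L(1) ly(2)] subgroup.m_inv_closed[OF Y(1) ly(3)] by auto
  ultimately show "inv a \<in> {l \<otimes> y | l y. l \<in> L \<and> y \<in> Y}" by blast
next
  fix a b assume "a \<in> {l \<otimes> y | l y. l \<in> L \<and> y \<in> Y}" "b \<in> {l \<otimes> y | l y. l \<in> L \<and> y \<in> Y}"
  then obtain l1 y1 l2 y2 where ly: "a = l1 \<otimes> y1" "l1 \<in> L" "y1 \<in> Y" "b = l2 \<otimes> y2" "l2 \<in> L" "y2 \<in> Y"
    by blast
  have A4: "l1 \<in> A" "y1 \<in> A" "l2 \<in> A" "y2 \<in> A" using ly L Y by auto
  have c: "l1 \<in> carrier G" "y1 \<in> carrier G" "l2 \<in> carrier G" "y2 \<in> carrier G" using A4 inA by auto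
  have "a \<otimes> b = l1 \<otimes> (y1 \<otimes> l2) \<otimes> y2" using ly c by (simp add: m_assoc)
  also have "\<dots> = l1 \<otimes> (l2 \<otimes> y1) \<otimes> y2" using ab[OF A4(2) A4(3)] by simp
  also have "\<dots> = (l1 \<otimes> l2) \<otimes> (y1 \<otimes> y2)" using c by (simp add: m_assoc)
  finally have "a \<otimes> b = (l1 \<otimes> l2) \<otimes> (y1 \<otimes> y2)" .
  moreover have "l1 \<otimes> l2 \<in> L" "y1 \<otimes> y2 \<in> Y"
    using subgroup.m_closed[OF L(1) ly(2) ly(5)] subgroup.m_closed[OF Y(1) ly(3) ly(6)] by auto
  ultimately show "a \<otimes> b \<in> {l \<otimes> y | l y. l \<in> L \<and> y \<in> Y}" by blast
qed

lemma ginv_prod: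
  assumes "ginv G L" "ginv G Y" "L \<subseteq> carrier G" "Y \<subseteq> carrier G"
  shows "ginv G {l \<otimes> y | l y. l \<in> L \<and> y \<in> Y}"
  unfolding ginv_def
proof (intro ballI)
  fix g a assume g: "g \<in> carrier G" and "a \<in> {l \<otimes> y | l y. l \<in> L \<and> y \<in> Y}"
  then obtain l y where ly: "a = l \<otimes> y" "l \<in> L" "y \<in> Y" by blast
  have "g \<otimes> a \<otimes> inv g = (g \<otimes> l \<otimes> inv g) \<otimes> (g \<otimes> y \<otimes> inv g)"
    using conj_mult[OF g] ly assms(3,4) by auto
  moreover have "g \<otimes> l \<otimes> inv g \<in> L" "g \<otimes> y \<otimes> inv g \<in> Y"
    using assms(1,2) g ly unfolding ginv_def by auto
  ultimately show "g \<otimes> a \<otimes> inv g \<in> {l \<otimes> y | l y. l \<in> L \<and> y \<in> Y}" by blast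
qed

lemma ginv_Int: "ginv G L \<Longrightarrow> ginv G K \<Longrightarrow> ginv G (L \<inter> K)"
  unfolding ginv_def by auto

lemma ginv_A: "ginv G A"
  unfolding ginv_def using nA2 by auto


lemma EXT:
  assumes d: "d \<in> A" "d \<noteq> \<one>"
  shows "\<exists>L. good L \<and> d \<notin> L"
proof -
  have dc: "d \<in> carrier G" using inA[OF d(1)] .
  obtain V where V: "subgroup V G" "openin T V" "\<forall>g\<in>carrier G. \<forall>v\<in>V. g \<otimes> v \<otimes> inv g \<in> V" "d \<notin> V"
    using open_normal_subgroup[OF dc d(2)] by blast
  define U where "U = A \<inter> V"
  define Zs where "Zs = {L. subgroup L G \<and> ginv G L \<and> U \<subseteq> L \<and> L \<subseteq> A \<and> d \<notin> L}"
  have UZ: "U \<in> Zs"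
  proof -
    have "subgroup U G" unfolding U_def using subgroups_Inter_pair[OF subA V(1)] .
    moreover have "ginv G U" unfolding U_def ginv_def using nA2 V(3) by auto
    ultimately show ?thesis unfolding Zs_def U_def using V(4) by auto
  qed
  have "\<exists>M\<in>Zs. \<forall>Y\<in>Zs. M \<subseteq> Y \<longrightarrow> Y = M"
  proof (rule Zorn_Lemma2, intro ballI)
    fix C assume C: "C \<in> chains Zs"
    have CZ: "C \<subseteq> Zs" and ch: "\<And>L1 L2. L1 \<in> C \<Longrightarrow> L2 \<in> C \<Longrightarrow> L1 \<subseteq> L2 \<or> L2 \<subseteq> L1"
      using C unfolding chains_def chain_subset_def by auto
    show "\<exists>U'\<in>Zs. \<forall>Y\<in>C. Y \<subseteq> U'"
    proof (cases "C = {}")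
      case True then show ?thesis using UZ by blast
    next
      case False
      then obtain L0 where L0: "L0 \<in> C" by blast
      have mem: "subgroup L G" "ginv G L" "U \<subseteq> L" "L \<subseteq> A" "d \<notin> L" if "L \<in> C" for L
        using that CZ unfolding Zs_def by auto
      have sg: "subgroup (\<Union>C) G"
      proof (rule subgroupI)
        show "\<Union>C \<subseteq> carrier G" using mem(4) Ac by blast
        show "\<Union>C \<noteq> {}" using L0 subgroup.one_closed[OF mem(1)[OF L0]] by blast
      next
        fix a assume "a \<in> \<Union>C"
        then obtain L where "L \<in> C" "a \<in> L" by blast
        then show "inv a \<in> \<Union>C" using subgroup.m_inv_closed[OF mem(1)] by blast
      next
        fix a b assume "a \<in> \<Union>C" "b \<in> \<Union>C"
        then obtain L1 L2 where L12: "L1 \<in> C" "a \<in> L1" "L2 \<in> C" "b \<in> L2" by blast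
        show "a \<otimes> b \<in> \<Union>C"
        proof (cases "L1 \<subseteq> L2")
          case True
          then have "a \<otimes> b \<in> L2" using subgroup.m_closed[OF mem(1)[OF L12(3)]] L12 by blast
          then show ?thesis using L12 by blast
        next
          case False
          then have "L2 \<subseteq> L1" using ch L12 by blast
          then have "a \<otimes> b \<in> L1" using subgroup.m_closed[OF mem(1)[OF L12(1)]] L12 by blast
          then show ?thesis using L12 by blast
        qed
      qed
      have "ginv G (\<Union>C)" unfolding ginv_def
      proof (intro ballI)
        fix g l assume g: "g \<in> carrier G" and "l \<in> \<Union>C"
        then obtain L where "L \<in> C" "l \<in> L" by blast
        then show "g \<otimes> l \<otimes> inv g \<in> \<Union>C" using mem(2) g unfolding ginv_def by blast
      qed
      moreover have "U \<subseteq> \<Union>C" using mem(3)[OF L0] L0 by blast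
      moreover have "\<Union>C \<subseteq> A" using mem(4) by blast
      moreover have "d \<notin> \<Union>C" using mem(5) by blast
      ultimately have "\<Union>C \<in> Zs" using sg unfolding Zs_def by blast
      then show ?thesis by blast
    qed
  qed
  then obtain L where LZ: "L \<in> Zs" and Lmax: "\<And>Y. Y \<in> Zs \<Longrightarrow> L \<subseteq> Y \<Longrightarrow> Y = L" by blast
  have L: "subgroup L G" "ginv G L" "U \<subseteq> L" "L \<subseteq> A" "d \<notin> L" using LZ unfolding Zs_def by auto
  have Lc: "closedin T L"
    using closed_between[OF V(1) V(2) cA subA L(1) _ L(4)] L(3) U_def by simp
  obtain N where "closedin T N \<and> subgroup N G \<and> N \<subseteq> A \<and> ginv G N \<and> L \<inter> N = {\<one>} \<and>
      (\<forall>a\<in>A. \<exists>l\<in>L. \<exists>n\<in>N. a = l \<otimes> n)"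
    using complement[OF Lc L(1) L(4)] by (elim exE) (rule that)
  then have N: "closedin T N" "subgroup N G" "N \<subseteq> A" "ginv G N" "L \<inter> N = {\<one>}"
      "\<And>a. a \<in> A \<Longrightarrow> \<exists>l\<in>L. \<exists>n\<in>N. a = l \<otimes> n" by auto
  have Nc: "N \<subseteq> carrier G" using N(3) Ac by blast
  have Lcar: "L \<subseteq> carrier G" using L(4) Ac by blast
  have key: "d \<in> {l \<otimes> y | l y. l \<in> L \<and> y \<in> Y}"
    if Y: "subgroup Y G" "ginv G Y" "Y \<subseteq> N" "Y \<noteq> {\<one>}" for Y
  proof (rule ccontr)
    assume nd: "d \<notin> {l \<otimes> y | l y. l \<in> L \<and> y \<in> Y}"
    define P where "P = {l \<otimes> y | l y. l \<in> L \<and> y \<in> Y}"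
    have YA: "Y \<subseteq> A" using Y(3) N(3) by blast
    have Psub: "subgroup P G" unfolding P_def using prod_subgroup[OF L(1) L(4) Y(1) YA] .
    have Pg: "ginv G P" unfolding P_def using ginv_prod[OF L(2) Y(2) Lcar] YA Ac by blast
    have LP: "L \<subseteq> P"
    proof
      fix l assume l: "l \<in> L"
      then have "l = l \<otimes> \<one>" using Lcar by auto
      then show "l \<in> P" unfolding P_def using l subgroup.one_closed[OF Y(1)] by blast
    qed
    have PA: "P \<subseteq> A"
    proof
      fix p assume "p \<in> P"
      then obtain l y where ly: "p = l \<otimes> y" "l \<in> L" "y \<in> Y" unfolding P_def by blast
      then have "l \<in> A" "y \<in> A" using L(4) YA by auto
      then show "p \<in> A" using ly(1) subgroup.m_closed[OF subA] by simp
    qed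
    have "P \<in> Zs" unfolding Zs_def using Psub Pg LP L(3) PA nd P_def by blast
    then have PL: "P = L" using Lmax LP by blast
    have "Y \<subseteq> L"
    proof
      fix y assume y: "y \<in> Y"
      then have "y = \<one> \<otimes> y" using YA Ac by auto
      then have "y \<in> P" unfolding P_def using y subgroup.one_closed[OF L(1)] by blast
      then show "y \<in> L" using PL by simp
    qed
    then have "Y \<subseteq> {\<one>}" using Y(3) N(5) by blast
    then show False using Y(4) subgroup.one_closed[OF Y(1)] by blast
  qed
  have NV: "x = \<one>" if "x \<in> N" "x \<in> V" for x
  proof -
    have "x \<in> U" using that N(3) U_def by blast
    then have "x \<in> L \<inter> N" using L(3) that by blast
    then show ?thesis using N(5) by blast
  qed
  have Nfin: "finite N"
  proof -
    have cN: "compactin T N" using closedin_compact_space[OF cpt N(1)] .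
    define f where "f = (\<lambda>x. (\<lambda>y. x \<otimes> y) ` V)"
    have "\<forall>U0\<in>f ` N. openin T U0" unfolding f_def using open_lmult[OF _ V(2)] Nc by blast
    moreover have "N \<subseteq> \<Union>(f ` N)"
    proof
      fix x assume x: "x \<in> N"
      then have "x = x \<otimes> \<one>" using Nc by auto
      then have "x \<in> f x" unfolding f_def using subgroup.one_closed[OF V(1)] by blast
      then show "x \<in> \<Union>(f ` N)" using x by blast
    qed
    ultimately obtain F where F: "finite F" "F \<subseteq> f ` N" "N \<subseteq> \<Union>F"
      using cN unfolding compactin_def by meson
    obtain N0 where N0: "N0 \<subseteq> N" "finite N0" "F = f ` N0" using finite_subset_image[OF F(1) F(2)] by blast
    have "N \<subseteq> N0"
    proof
      fix y assume y: "y \<in> N"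
      then obtain x where x: "x \<in> N0" "y \<in> f x" using F(3) N0(3) by blast
      then obtain v where v: "v \<in> V" "y = x \<otimes> v" unfolding f_def by blast
      have xN: "x \<in> N" using x N0 by blast
      have xc: "x \<in> carrier G" using xN Nc by blast
      have vc: "v \<in> carrier G" using subgroup.mem_carrier[OF V(1) v(1)] .
      have "v = inv x \<otimes> y" using v(2) xc vc by simp
      moreover have "inv x \<otimes> y \<in> N" using subgroup.m_closed[OF N(2) subgroup.m_inv_closed[OF N(2) xN] y] .
      ultimately have "v = \<one>" using NV v(1) by simp
      then have "y = x" using v(2) xc by simp
      then show "y \<in> N0" using x by simp
    qed
    then show ?thesis using finite_subset N0(2) by blast
  qed
  have Nnt: "N \<noteq> {\<one>}"
  proof
    assume N1: "N = {\<one>}"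
    obtain l n where ln: "l \<in> L" "n \<in> N" "d = l \<otimes> n" using N(6)[OF d(1)] by blast
    then have "d = l" using N1 Lcar by auto
    then show False using ln L(5) by simp
  qed
  have Nmin: "M = {\<one>} \<or> M = N" if M: "subgroup M G" "M \<subseteq> N" for M
  proof (rule ccontr)
    assume nM: "\<not> (M = {\<one>} \<or> M = N)"
    have MA: "M \<subseteq> A" using M(2) N(3) by blast
    have "M \<subseteq> carrier G" using M(2) Nc by blast
    then have Mc: "closedin T M" using closed_finite[OF finite_subset[OF M(2) Nfin]] by simp
    obtain L' where "closedin T L' \<and> subgroup L' G \<and> L' \<subseteq> A \<and> ginv G L' \<and> M \<inter> L' = {\<one>} \<and>
        (\<forall>a\<in>A. \<exists>m\<in>M. \<exists>l\<in>L'. a = m \<otimes> l)"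
      using complement[OF Mc M(1) MA] by (elim exE) (rule that)
    then have L': "closedin T L'" "subgroup L' G" "L' \<subseteq> A" "ginv G L'" "M \<inter> L' = {\<one>}"
        "\<And>a. a \<in> A \<Longrightarrow> \<exists>m\<in>M. \<exists>l\<in>L'. a = m \<otimes> l" by auto
    define N2 where "N2 = N \<inter> L'"
    have N2s: "subgroup N2 G" unfolding N2_def using subgroups_Inter_pair[OF N(2) L'(2)] .
    have N2g: "ginv G N2" unfolding N2_def using ginv_Int[OF N(4) L'(4)] .
    have N2c: "closedin T N2" unfolding N2_def using closedin_Int[OF N(1) L'(1)] .
    have N2N: "N2 \<subseteq> N" unfolding N2_def by blast
    have N2A: "N2 \<subseteq> A" using N2N N(3) by blast
    have N2nt: "N2 \<noteq> {\<one>}"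
    proof
      assume N21: "N2 = {\<one>}"
      have "N \<subseteq> M"
      proof
        fix n assume n: "n \<in> N"
        obtain m l where ml: "m \<in> M" "l \<in> L'" "n = m \<otimes> l" using L'(6) n N(3) by blast
        have mN: "m \<in> N" using ml M(2) by blast
        have mc: "m \<in> carrier G" "l \<in> carrier G" using subgroup.mem_carrier[OF M(1) ml(1)] subgroup.mem_carrier[OF L'(2) ml(2)] by auto
        have "l = inv m \<otimes> n" using ml(3) mc by simp
        then have "l \<in> N" using subgroup.m_closed[OF N(2) subgroup.m_inv_closed[OF N(2) mN] n] by simp
        then have "l = \<one>" using ml(2) N21 N2_def by blast
        then show "n \<in> M" using ml mc by simp
      qed
      then show False using nM M(2) by blast
    qed
    have N2ne: "N2 \<noteq> N"
    proof
      assume "N2 = N"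
      then have "M \<subseteq> L'" using M(2) N2_def by blast
      then show False using L'(5) nM by blast
    qed
    obtain L'' where "closedin T L'' \<and> subgroup L'' G \<and> L'' \<subseteq> A \<and> ginv G L'' \<and> N2 \<inter> L'' = {\<one>} \<and>
        (\<forall>a\<in>A. \<exists>m\<in>N2. \<exists>l\<in>L''. a = m \<otimes> l)"
      using complement[OF N2c N2s N2A] by (elim exE) (rule that)
    then have L'': "closedin T L''" "subgroup L'' G" "L'' \<subseteq> A" "ginv G L''" "N2 \<inter> L'' = {\<one>}"
        "\<And>a. a \<in> A \<Longrightarrow> \<exists>m\<in>N2. \<exists>l\<in>L''. a = m \<otimes> l" by auto
    define N3 where "N3 = N \<inter> L''"
    have N3s: "subgroup N3 G" unfolding N3_def using subgroups_Inter_pair[OF N(2) L''(2)] .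
    have N3g: "ginv G N3" unfolding N3_def using ginv_Int[OF N(4) L''(4)] .
    have N3N: "N3 \<subseteq> N" unfolding N3_def by blast
    have N3nt: "N3 \<noteq> {\<one>}"
    proof
      assume N31: "N3 = {\<one>}"
      have "N \<subseteq> N2"
      proof
        fix n assume n: "n \<in> N"
        obtain m l where ml: "m \<in> N2" "l \<in> L''" "n = m \<otimes> l" using L''(6) n N(3) by blast
        have mN: "m \<in> N" using ml N2N by blast
        have mc: "m \<in> carrier G" "l \<in> carrier G" using subgroup.mem_carrier[OF N2s ml(1)] subgroup.mem_carrier[OF L''(2) ml(2)] by auto
        have "l = inv m \<otimes> n" using ml(3) mc by simp
        then have "l \<in> N" using subgroup.m_closed[OF N(2) subgroup.m_inv_closed[OF N(2) mN] n] by simp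
        then have "l = \<one>" using ml(2) N31 N3_def by blast
        then show "n \<in> N2" using ml mc by simp
      qed
      then show False using N2ne N2N by blast
    qed
    obtain l2 y2 where ly2: "d = l2 \<otimes> y2" "l2 \<in> L" "y2 \<in> N2" using key[OF N2s N2g N2N N2nt] by blast
    obtain l3 y3 where ly3: "d = l3 \<otimes> y3" "l3 \<in> L" "y3 \<in> N3" using key[OF N3s N3g N3N N3nt] by blast
    have c: "l2 \<in> carrier G" "l3 \<in> carrier G" "y2 \<in> carrier G" "y3 \<in> carrier G"
      using ly2 ly3 Lcar N2N N3N Nc by auto
    have "inv l3 \<otimes> l2 = inv l3 \<otimes> (l2 \<otimes> y2) \<otimes> inv y2" using c by (simp add: m_assoc)
    also have "\<dots> = inv l3 \<otimes> (l3 \<otimes> y3) \<otimes> inv y2" using ly2(1) ly3(1) by simp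
    also have "\<dots> = y3 \<otimes> inv y2" using c by simp
    finally have w: "inv l3 \<otimes> l2 = y3 \<otimes> inv y2" .
    have "inv l3 \<otimes> l2 \<in> L" using subgroup.m_closed[OF L(1) subgroup.m_inv_closed[OF L(1) ly3(2)] ly2(2)] .
    moreover have "y3 \<in> N" "y2 \<in> N" using ly2(3) ly3(3) N2N N3N by auto
    then have "y3 \<otimes> inv y2 \<in> N"
      using subgroup.m_closed[OF N(2) _ subgroup.m_inv_closed[OF N(2)]] by simp
    ultimately have "y3 \<otimes> inv y2 = \<one>" using w N(5) by auto
    moreover have "y3 = (y3 \<otimes> inv y2) \<otimes> y2" using c by (simp add: m_assoc)
    ultimately have "y3 = y2" using c by simp
    then have "y2 \<in> N2 \<inter> L''" using ly2(3) ly3(3) N3_def by blast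
    then have "y2 = \<one>" using L''(5) by blast
    then have "d = l2" using ly2 c by simp
    then show False using ly2(2) L(5) by simp
  qed
  have Np: "Factorial_Ring.prime (card N)"
    by (rule prime_card_if_no_subgroups[OF N(2) Nfin Nnt Nmin])
  have "\<forall>a\<in>A. \<exists>n\<in>N. \<exists>l\<in>L. a = n \<otimes> l"
  proof
    fix a assume a: "a \<in> A"
    obtain l n where ln: "l \<in> L" "n \<in> N" "a = l \<otimes> n" using N(6)[OF a] by blast
    have "a = n \<otimes> l" using ln ab L(4) N(3) by blast
    then show "\<exists>n\<in>N. \<exists>l\<in>L. a = n \<otimes> l" using ln by blast
  qed
  moreover have "N \<inter> L = {\<one>}" using N(5) by blast
  ultimately have "\<exists>N. subgroup N G \<and> N \<subseteq> A \<and> Factorial_Ring.prime (card N) \<and> N \<inter> L = {\<one>} \<and>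
          (\<forall>a\<in>A. \<exists>n\<in>N. \<exists>l\<in>L. a = n \<otimes> l)" using N(2) N(3) Np by blast
  then have "good L" unfolding good_def using Lc L(1) L(4) L(2) by simp
  then show ?thesis using L(5) by blast
qed

end


context setting begin

lemma PI:
  assumes L0: "subgroup L0 G" "L0 \<subseteq> A"
    and N: "subgroup N G" "N \<subseteq> A" "Factorial_Ring.prime (card N)" "N \<inter> L0 = {\<one>}"
      "\<forall>a\<in>A. \<exists>n\<in>N. \<exists>l\<in>L0. a = n \<otimes> l"
    and Xs: "subgroup Xs G" "Xs \<subseteq> A"
    and Y: "subgroup Y G" "Xs \<inter> L0 \<subseteq> Y" "Y \<subseteq> Xs" "\<not> Y \<subseteq> L0"
  shows "Y = Xs"
proof -
  obtain y where y: "y \<in> Y" "y \<notin> L0" using Y(4) by blast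
  have YA: "Y \<subseteq> A" using Y(3) Xs(2) by blast
  have yA: "y \<in> A" using y(1) YA by blast
  obtain n0 l0 where nl0: "n0 \<in> N" "l0 \<in> L0" "y = n0 \<otimes> l0" using N(5) yA by blast
  define P where "P = {a \<otimes> b | a b. a \<in> Y \<and> b \<in> L0}"
  have Ps: "subgroup P G" unfolding P_def using prod_subgroup[OF Y(1) YA L0(1) L0(2)] .
  define Zn where "Zn = N \<inter> P"
  have Zs: "subgroup Zn G" unfolding Zn_def using subgroups_Inter_pair[OF N(1) Ps] .
  have c0: "n0 \<in> carrier G" "l0 \<in> carrier G" using nl0 N(2) L0(2) Ac by auto
  have "n0 = y \<otimes> inv l0" using nl0(3) c0 by (simp add: m_assoc)
  moreover have "inv l0 \<in> L0" using subgroup.m_inv_closed[OF L0(1) nl0(2)] .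
  ultimately have "n0 \<in> P" unfolding P_def using y(1) by blast
  then have n0Z: "n0 \<in> Zn" using nl0(1) Zn_def by blast
  have "n0 \<noteq> \<one>"
  proof
    assume "n0 = \<one>"
    then have "y = l0" using nl0(3) c0 by simp
    then show False using y nl0 by simp
  qed
  then have "Zn \<noteq> {\<one>}" using n0Z by blast
  then have ZN: "Zn = N" using prime_sub[OF N(1) N(3) Zs] Zn_def by blast
  show "Y = Xs"
  proof
    show "Y \<subseteq> Xs" using Y(3) .
    show "Xs \<subseteq> Y"
    proof
      fix x assume x: "x \<in> Xs"
      have xA: "x \<in> A" using x Xs(2) by blast
      obtain m l' where ml: "m \<in> N" "l' \<in> L0" "x = m \<otimes> l'" using N(5) xA by blast
      have "m \<in> P" using ml(1) ZN Zn_def by blast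
      then obtain y' l'' where yl: "m = y' \<otimes> l''" "y' \<in> Y" "l'' \<in> L0" unfolding P_def by blast
      have c: "y' \<in> carrier G" "l'' \<in> carrier G" "l' \<in> carrier G"
        using yl(2,3) ml(2) YA L0(2) Ac by auto
      have e1: "inv y' \<otimes> x = l'' \<otimes> l'" using ml(3) yl(1) c by (simp add: m_assoc)
      have "l'' \<otimes> l' \<in> L0" using subgroup.m_closed[OF L0(1) yl(3) ml(2)] .
      moreover have "y' \<in> Xs" using yl(2) Y(3) by blast
      then have "inv y' \<otimes> x \<in> Xs" using subgroup.m_closed[OF Xs(1) subgroup.m_inv_closed[OF Xs(1)] x] by simp
      ultimately have "inv y' \<otimes> x \<in> Xs \<inter> L0" using e1 by simp
      then have i: "inv y' \<otimes> x \<in> Y" using Y(2) by blast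
      have xc: "x \<in> carrier G" using xA Ac by blast
      have "x = y' \<otimes> (inv y' \<otimes> x)" using c xc by simp
      moreover have "y' \<otimes> (inv y' \<otimes> x) \<in> Y" using subgroup.m_closed[OF Y(1) yl(2) i] .
      ultimately show "x \<in> Y" by simp
    qed
  qed
qed

lemma normal_in_A:
  assumes "subgroup H G" "H \<subseteq> A"
  shows "H \<lhd> G\<lparr>carrier := A\<rparr>"
proof -
  have grp: "group (G\<lparr>carrier := A\<rparr>)" using subgroup_imp_group[OF subA] .
  have sH: "subgroup H (G\<lparr>carrier := A\<rparr>)" using subgroup_incl[OF assms(1) subA assms(2)] .
  have "\<forall>x\<in>carrier (G\<lparr>carrier := A\<rparr>). \<forall>h\<in>H.
          x \<otimes>\<^bsub>G\<lparr>carrier := A\<rparr>\<^esub> h \<otimes>\<^bsub>G\<lparr>carrier := A\<rparr>\<^esub> inv\<^bsub>G\<lparr>carrier := A\<rparr>\<^esub> x \<in> H"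
  proof (intro ballI)
    fix x h assume x: "x \<in> carrier (G\<lparr>carrier := A\<rparr>)" and h: "h \<in> H"
    have xA: "x \<in> A" using x by simp
    have hA: "h \<in> A" using h assms(2) by blast
    have "inv\<^bsub>G\<lparr>carrier := A\<rparr>\<^esub> x = inv x" using m_inv_consistent[OF subA xA] .
    moreover have "x \<otimes> h \<otimes> inv x = h"
    proof -
      have "x \<otimes> h = h \<otimes> x" using ab[OF xA hA] .
      then show ?thesis using inA[OF xA] inA[OF hA] by (simp add: m_assoc)
    qed
    ultimately show "x \<otimes>\<^bsub>G\<lparr>carrier := A\<rparr>\<^esub> h \<otimes>\<^bsub>G\<lparr>carrier := A\<rparr>\<^esub> inv\<^bsub>G\<lparr>carrier := A\<rparr>\<^esub> x \<in> H"
      using h by simp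
  qed
  then show ?thesis using group.normal_inv_iff[OF grp] sH by blast
qed

end

context setting begin

definition indep :: "'a set set \<Rightarrow> bool" where
  "indep Ls \<longleftrightarrow> (\<forall>L\<in>Ls. good L) \<and> (\<forall>L\<in>Ls. \<forall>F. finite F \<and> F \<subseteq> Ls - {L} \<longrightarrow> \<not> (A \<inter> \<Inter>F \<subseteq> L))"

lemma goodD: "good L \<Longrightarrow> closedin T L \<and> subgroup L G \<and> L \<subseteq> A \<and> ginv G L"
  unfolding good_def by simp

lemma sub_Inter:
  assumes "\<And>L. L \<in> F \<Longrightarrow> subgroup L G"
  shows "subgroup (A \<inter> \<Inter>F) G"
proof -
  have "A \<inter> \<Inter>F = \<Inter>(insert A F)" by simp
  moreover have "subgroup (\<Inter>(insert A F)) G"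
    by (rule subgroups_Inter) (use assms subA in auto)
  ultimately show ?thesis by simp
qed

lemma exists_max: "\<exists>Ls. indep Ls \<and> (\<forall>Ls'. indep Ls' \<longrightarrow> Ls \<subseteq> Ls' \<longrightarrow> Ls' = Ls)"
proof -
  have "\<exists>M\<in>Collect indep. \<forall>Y\<in>Collect indep. M \<subseteq> Y \<longrightarrow> Y = M"
  proof (rule Zorn_Lemma, intro ballI)
    fix C assume C: "C \<in> chains (Collect indep)"
    have CI: "\<And>Ls. Ls \<in> C \<Longrightarrow> indep Ls" using C unfolding chains_def by auto
    have sc: "subset.chain (Collect indep) C" using C chains_alt_def by blast
    have g: "\<forall>L\<in>\<Union>C. good L"
    proof
      fix L assume "L \<in> \<Union>C"
      then obtain Ls where "Ls \<in> C" "L \<in> Ls" by blast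
      then show "good L" using CI unfolding indep_def by blast
    qed
    have "\<forall>L\<in>\<Union>C. \<forall>F. finite F \<and> F \<subseteq> \<Union>C - {L} \<longrightarrow> \<not> (A \<inter> \<Inter>F \<subseteq> L)"
    proof (intro ballI allI impI)
      fix L F assume L: "L \<in> \<Union>C" and F: "finite F \<and> F \<subseteq> \<Union>C - {L}"
      have "C \<noteq> {}" using L by blast
      moreover have "finite (insert L F)" using F by simp
      moreover have "insert L F \<subseteq> \<Union>C" using L F by blast
      ultimately obtain Ls where Ls: "Ls \<in> C" "insert L F \<subseteq> Ls"
        using finite_subset_Union_chain[OF _ _ _ sc] by metis
      have "indep Ls" using CI Ls(1) .
      moreover have "L \<in> Ls" "F \<subseteq> Ls - {L}" using Ls(2) F by auto
      ultimately show "\<not> (A \<inter> \<Inter>F \<subseteq> L)" using F unfolding indep_def by blast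
    qed
    with g have "indep (\<Union>C)" unfolding indep_def by blast
    then show "\<Union>C \<in> Collect indep" by simp
  qed
  then show ?thesis by auto
qed

lemma max_D:
  assumes I: "indep Ls" and mx: "\<And>Ls'. indep Ls' \<Longrightarrow> Ls \<subseteq> Ls' \<Longrightarrow> Ls' = Ls"
  shows "A \<inter> \<Inter>Ls = {\<one>}"
proof
  have gL: "\<And>L. L \<in> Ls \<Longrightarrow> good L" using I unfolding indep_def by blast
  have sL: "\<And>L. L \<in> Ls \<Longrightarrow> subgroup L G" using gL goodD by blast
  show "{\<one>} \<subseteq> A \<inter> \<Inter>Ls" using subgroup.one_closed[OF subA] subgroup.one_closed[OF sL] by blast
  show "A \<inter> \<Inter>Ls \<subseteq> {\<one>}"
  proof (rule ccontr)
    assume "\<not> A \<inter> \<Inter>Ls \<subseteq> {\<one>}"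
    then obtain d where d: "d \<in> A" "d \<in> \<Inter>Ls" "d \<noteq> \<one>" by blast
    obtain L0 where L0: "good L0" "d \<notin> L0" using EXT[OF d(1) d(3)] by blast
    have L0n: "L0 \<notin> Ls" using d(2) L0(2) by blast
    have "indep (insert L0 Ls)"
      unfolding indep_def
    proof (intro conjI ballI allI impI)
      fix L assume "L \<in> insert L0 Ls"
      then show "good L" using L0(1) gL by blast
    next
      fix L F assume L: "L \<in> insert L0 Ls" and F: "finite F \<and> F \<subseteq> insert L0 Ls - {L}"
      show "\<not> (A \<inter> \<Inter>F \<subseteq> L)"
      proof (cases "L = L0")
        case True
        then have "F \<subseteq> Ls" using F by blast
        then have "d \<in> A \<inter> \<Inter>F" using d by blast
        then show ?thesis using True L0(2) by blast
      next
        case False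
        then have LLs: "L \<in> Ls" using L by blast
        show ?thesis
        proof (cases "L0 \<in> F")
          case False
          then have "F \<subseteq> Ls - {L}" using F by blast
          then show ?thesis using I LLs F unfolding indep_def by blast
        next
          case True
          define F' where "F' = F - {L0}"
          have F': "finite F'" "F' \<subseteq> Ls - {L}" using F F'_def by auto
          have old: "\<not> (A \<inter> \<Inter>F' \<subseteq> L)" using I LLs F' unfolding indep_def by blast
          define Xs where "Xs = A \<inter> \<Inter>F'"
          have Xss: "subgroup Xs G" unfolding Xs_def using sub_Inter sL F'(2) by blast
          have XsA: "Xs \<subseteq> A" unfolding Xs_def by blast
          have FX: "A \<inter> \<Inter>F = Xs \<inter> L0" unfolding Xs_def F'_def using True by blast
          show ?thesis
          proof
            assume H: "A \<inter> \<Inter>F \<subseteq> L"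
            obtain N where N: "subgroup N G" "N \<subseteq> A" "Factorial_Ring.prime (card N)" "N \<inter> L0 = {\<one>}"
                "\<forall>a\<in>A. \<exists>n\<in>N. \<exists>l\<in>L0. a = n \<otimes> l"
              using L0(1) unfolding good_def by blast
            have L0s: "subgroup L0 G" "L0 \<subseteq> A" using goodD[OF L0(1)] by auto
            have Ys: "subgroup (Xs \<inter> L) G" using subgroups_Inter_pair[OF Xss sL[OF LLs]] .
            have "Xs \<inter> L0 \<subseteq> Xs \<inter> L" using H FX by blast
            moreover have "Xs \<inter> L \<subseteq> Xs" by blast
            moreover have "\<not> (Xs \<inter> L \<subseteq> L0)"
            proof
              assume "Xs \<inter> L \<subseteq> L0"
              moreover have "d \<in> Xs \<inter> L" unfolding Xs_def using d F'(2) LLs by blast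
              ultimately show False using L0(2) by blast
            qed
            ultimately have "Xs \<inter> L = Xs" using PI[OF L0s N Xss XsA Ys] by blast
            then show False using old Xs_def by blast
          qed
        qed
      qed
    qed
    then have "insert L0 Ls = Ls" using mx by blast
    then show False using L0n by blast
  qed
qed


lemma main:
  assumes nt: "A \<noteq> {\<one>}"
  shows "\<exists>\<H>. (\<forall>H\<in>\<H>. subgroup H G \<and> H \<subseteq> A \<and> G_invariant G H \<and> Factorial_Ring.prime (card H))
           \<and> internal_cartesian_product G T A \<H> (\<lambda>H. H)"
proof -
  obtain Ls where I: "indep Ls" and mx: "\<And>Ls'. indep Ls' \<Longrightarrow> Ls \<subseteq> Ls' \<Longrightarrow> Ls' = Ls"
    using exists_max by blast
  have D: "A \<inter> \<Inter>Ls = {\<one>}" using max_D[OF I mx] by blast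
  have gL: "\<And>L. L \<in> Ls \<Longrightarrow> good L" using I unfolding indep_def by blast
  have sL: "\<And>L. L \<in> Ls \<Longrightarrow> subgroup L G" using gL goodD by blast
  have cL: "\<And>L. L \<in> Ls \<Longrightarrow> closedin T L" using gL goodD by blast
  have LA: "\<And>L. L \<in> Ls \<Longrightarrow> L \<subseteq> A" using gL goodD by blast
  have gi: "\<And>L. L \<in> Ls \<Longrightarrow> ginv G L" using gL goodD by blast
  have ind: "\<And>L F. L \<in> Ls \<Longrightarrow> finite F \<Longrightarrow> F \<subseteq> Ls - {L} \<Longrightarrow> \<not> (A \<inter> \<Inter>F \<subseteq> L)"
    using I unfolding indep_def by blast
  have Lne: "Ls \<noteq> {}"
  proof
    assume "Ls = {}"
    then have "A = {\<one>}" using D by simp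
    then show False using nt by simp
  qed
  define Mf where "Mf L = A \<inter> \<Inter>(Ls - {L})" for L
  have Ms: "subgroup (Mf L) G" for L unfolding Mf_def using sub_Inter sL by blast
  have MA: "Mf L \<subseteq> A" for L unfolding Mf_def by blast
  have Mcar: "Mf L \<subseteq> carrier G" for L using MA Ac by blast
  have Mc: "closedin T (Mf L)" for L
  proof -
    have "Mf L = \<Inter>(insert A (Ls - {L}))" unfolding Mf_def by simp
    moreover have "closedin T (\<Inter>(insert A (Ls - {L})))"
      by (rule closedin_Inter) (use cA cL in auto)
    ultimately show ?thesis by simp
  qed
  have Mg: "ginv G (Mf L)" for L
    unfolding ginv_def Mf_def
  proof (intro ballI)
    fix g l assume g: "g \<in> carrier G" and l: "l \<in> A \<inter> \<Inter>(Ls - {L})"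
    have "g \<otimes> l \<otimes> inv g \<in> A" using nA2 g l by blast
    moreover have "g \<otimes> l \<otimes> inv g \<in> L'" if "L' \<in> Ls - {L}" for L'
      using gi[of L'] that g l unfolding ginv_def by blast
    ultimately show "g \<otimes> l \<otimes> inv g \<in> A \<inter> \<Inter>(Ls - {L})" by blast
  qed
  have Msub: "Mf L \<subseteq> L'" if "L' \<in> Ls" "L' \<noteq> L" for L L'
    unfolding Mf_def using that by blast
  have MiL: "Mf L \<inter> L = {\<one>}" if L: "L \<in> Ls" for L
  proof
    show "Mf L \<inter> L \<subseteq> {\<one>}"
    proof -
      have "Mf L \<inter> L \<subseteq> A \<inter> \<Inter>Ls" unfolding Mf_def using L by blast
      then show ?thesis using D by simp
    qed
    show "{\<one>} \<subseteq> Mf L \<inter> L" using subgroup.one_closed[OF Ms] subgroup.one_closed[OF sL[OF L]] by blast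
  qed
  have Mnot: "\<not> Mf L \<subseteq> L" if L: "L \<in> Ls" for L
  proof
    assume ML0: "Mf L \<subseteq> L"
    obtain N where N: "subgroup N G" "N \<subseteq> A" "Factorial_Ring.prime (card N)" "N \<inter> L = {\<one>}"
        "\<forall>a\<in>A. \<exists>n\<in>N. \<exists>l\<in>L. a = n \<otimes> l"
      using gL[OF L] unfolding good_def by blast
    have Nfin: "finite N" using N(3) card_ge_0_finite prime_gt_0_nat by blast
    have Lc: "L \<subseteq> carrier G" using LA[OF L] Ac by blast
    have Nc: "N \<subseteq> carrier G" using N(2) Ac by blast
    have eqAL: "A - L = \<Union>((\<lambda>n. (\<lambda>x. n \<otimes> x) ` L) ` (N - {\<one>}))"
    proof
      show "A - L \<subseteq> \<Union>((\<lambda>n. (\<lambda>x. n \<otimes> x) ` L) ` (N - {\<one>}))"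
      proof
        fix a assume a: "a \<in> A - L"
        then obtain n l where nl: "n \<in> N" "l \<in> L" "a = n \<otimes> l" using N(5) by blast
        have "n \<noteq> \<one>" using nl a Lc by auto
        then show "a \<in> \<Union>((\<lambda>n. (\<lambda>x. n \<otimes> x) ` L) ` (N - {\<one>}))" using nl by blast
      qed
      show "\<Union>((\<lambda>n. (\<lambda>x. n \<otimes> x) ` L) ` (N - {\<one>})) \<subseteq> A - L"
      proof
        fix a assume "a \<in> \<Union>((\<lambda>n. (\<lambda>x. n \<otimes> x) ` L) ` (N - {\<one>}))"
        then obtain n l where nl: "n \<in> N" "n \<noteq> \<one>" "l \<in> L" "a = n \<otimes> l" by blast
        have c: "n \<in> carrier G" "l \<in> carrier G" using nl Nc Lc by auto
        have aA: "a \<in> A" using nl N(2) LA[OF L] subgroup.m_closed[OF subA] by blast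
        have "a \<notin> L"
        proof
          assume aL: "a \<in> L"
          have "n = a \<otimes> inv l" using nl(4) c by (simp add: m_assoc)
          moreover have "a \<otimes> inv l \<in> L" using subgroup.m_closed[OF sL[OF L] aL subgroup.m_inv_closed[OF sL[OF L] nl(3)]] .
          ultimately have "n \<in> N \<inter> L" using nl(1) by simp
          then show False using N(4) nl(2) by blast
        qed
        then show "a \<in> A - L" using aA by blast
      qed
    qed
    have ALc: "closedin T (A - L)"
      unfolding eqAL
    proof (rule closedin_Union)
      show "finite ((\<lambda>n. (\<otimes>) n ` L) ` (N - {\<one>}))" using Nfin by simp
      fix S0 assume "S0 \<in> (\<lambda>n. (\<otimes>) n ` L) ` (N - {\<one>})"
      then obtain n where n: "n \<in> N" "S0 = (\<otimes>) n ` L" by blast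
      then show "closedin T S0" using closed_lmult[OF _ cL[OF L]] Nc by blast
    qed
    define U where "U = insert A (insert (A - L) (Ls - {L}))"
    have Ucl: "\<forall>C\<in>U. closedin T C" unfolding U_def using cA ALc cL by blast
    have Uem: "\<Inter>U = {}"
    proof -
      have "\<Inter>U \<subseteq> Mf L - L" unfolding U_def Mf_def by blast
      then show ?thesis using ML0 by blast
    qed
    have "\<not> (\<forall>F. finite F \<and> F \<subseteq> U \<longrightarrow> \<Inter>F \<noteq> {})"
      using cpt[unfolded compact_space_fip] Ucl Uem by blast
    then obtain F0 where F0: "finite F0" "F0 \<subseteq> U" "\<Inter>F0 = {}" by blast
    define F where "F = F0 - {A, A - L}"
    have F: "finite F" "F \<subseteq> Ls - {L}" using F0 unfolding F_def U_def by auto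
    have "A \<inter> \<Inter>F \<subseteq> L"
    proof
      fix z assume z: "z \<in> A \<inter> \<Inter>F"
      show "z \<in> L"
      proof (rule ccontr)
        assume "z \<notin> L"
        then have "z \<in> \<Inter>F0" using z unfolding F_def by blast
        then show False using F0(3) by blast
      qed
    qed
    then show False using ind[OF L F] by blast
  qed
  have Mdec: "\<forall>a\<in>A. \<exists>m\<in>Mf L. \<exists>l\<in>L. a = m \<otimes> l" if L: "L \<in> Ls" for L
  proof -
    obtain N where N: "subgroup N G" "N \<subseteq> A" "Factorial_Ring.prime (card N)" "N \<inter> L = {\<one>}"
        "\<forall>a\<in>A. \<exists>n\<in>N. \<exists>l\<in>L. a = n \<otimes> l"
      using gL[OF L] unfolding good_def by blast
    define P where "P = {m \<otimes> l | m l. m \<in> Mf L \<and> l \<in> L}"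
    have Ps: "subgroup P G" unfolding P_def using prod_subgroup[OF Ms MA sL[OF L] LA[OF L]] .
    have "A \<inter> L \<subseteq> P"
    proof
      fix l assume l: "l \<in> A \<inter> L"
      then have "l = \<one> \<otimes> l" using Ac by auto
      then show "l \<in> P" unfolding P_def using l subgroup.one_closed[OF Ms] by blast
    qed
    moreover have PA: "P \<subseteq> A"
    proof
      fix p assume "p \<in> P"
      then obtain m l where ml: "p = m \<otimes> l" "m \<in> Mf L" "l \<in> L" unfolding P_def by blast
      then have "m \<in> A" "l \<in> A" using MA LA[OF L] by auto
      then show "p \<in> A" using ml(1) subgroup.m_closed[OF subA] by simp
    qed
    moreover have "\<not> P \<subseteq> L"
    proof
      assume PL: "P \<subseteq> L"
      have "Mf L \<subseteq> P"
      proof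
        fix m assume m: "m \<in> Mf L"
        then have "m = m \<otimes> \<one>" using Mcar[of L] by auto
        then show "m \<in> P" unfolding P_def using m subgroup.one_closed[OF sL[OF L]] by blast
      qed
      then show False using PL Mnot[OF L] by blast
    qed
    ultimately have "P = A" using PI[OF sL[OF L] LA[OF L] N subA subset_refl Ps] by blast
    then show ?thesis unfolding P_def by blast
  qed
  have Mprime: "Factorial_Ring.prime (card (Mf L))" if L: "L \<in> Ls" for L
  proof -
    obtain N where N: "subgroup N G" "N \<subseteq> A" "Factorial_Ring.prime (card N)" "N \<inter> L = {\<one>}"
        "\<forall>a\<in>A. \<exists>n\<in>N. \<exists>l\<in>L. a = n \<otimes> l"
      using gL[OF L] unfolding good_def by blast
    have Nfin: "finite N" using N(3) card_ge_0_finite prime_gt_0_nat by blast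
    have Lc: "L \<subseteq> carrier G" using LA[OF L] Ac by blast
    have Nc: "N \<subseteq> carrier G" using N(2) Ac by blast
    define phi where "phi y = (SOME n. n \<in> N \<and> (\<exists>l\<in>L. y = n \<otimes> l))" for y
    have phi: "phi y \<in> N \<and> (\<exists>l\<in>L. y = phi y \<otimes> l)" if "y \<in> Mf L" for y
    proof -
      have "\<exists>n. n \<in> N \<and> (\<exists>l\<in>L. y = n \<otimes> l)" using N(5) that MA by blast
      then show ?thesis unfolding phi_def by (rule someI_ex)
    qed
    have inj: "inj_on phi (Mf L)"
    proof (rule inj_onI)
      fix y1 y2 assume y: "y1 \<in> Mf L" "y2 \<in> Mf L" "phi y1 = phi y2"
      obtain l1 where l1: "l1 \<in> L" "y1 = phi y1 \<otimes> l1" using phi[OF y(1)] by blast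
      obtain l2 where l2: "l2 \<in> L" "y2 = phi y2 \<otimes> l2" using phi[OF y(2)] by blast
      have nc: "phi y1 \<in> carrier G" using phi[OF y(1)] Nc by blast
      have c: "l1 \<in> carrier G" "l2 \<in> carrier G" "y1 \<in> carrier G" "y2 \<in> carrier G"
        using l1 l2 y Lc Mcar by auto
      define n where "n = phi y1"
      have e1: "y1 = n \<otimes> l1" "y2 = n \<otimes> l2" using l1(2) l2(2) y(3) n_def by auto
      have ncn: "n \<in> carrier G" using nc n_def by simp
      have "inv y1 \<otimes> y2 = inv (n \<otimes> l1) \<otimes> (n \<otimes> l2)" using e1 by simp
      also have "\<dots> = (inv l1 \<otimes> inv n) \<otimes> (n \<otimes> l2)" using ncn c by (simp add: inv_mult_group)
      also have "\<dots> = inv l1 \<otimes> l2" using ncn c by (simp add: m_assoc)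
      finally have "inv y1 \<otimes> y2 = inv l1 \<otimes> l2" .
      moreover have "inv l1 \<otimes> l2 \<in> L"
        using subgroup.m_closed[OF sL[OF L] subgroup.m_inv_closed[OF sL[OF L] l1(1)] l2(1)] .
      moreover have "inv y1 \<otimes> y2 \<in> Mf L"
        using subgroup.m_closed[OF Ms subgroup.m_inv_closed[OF Ms y(1)] y(2)] .
      ultimately have "inv y1 \<otimes> y2 \<in> Mf L \<inter> L" by simp
      then have "inv y1 \<otimes> y2 = \<one>" using MiL[OF L] by blast
      moreover have "y2 = y1 \<otimes> (inv y1 \<otimes> y2)" using c by simp
      ultimately show "y1 = y2" using c by simp
    qed
    have "phi ` Mf L \<subseteq> N" using phi by blast
    then have Mfin: "finite (Mf L)" using finite_imageD[OF finite_subset[OF _ Nfin] inj] by blast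
    obtain x where x: "x \<in> Mf L" "x \<notin> L" using Mnot[OF L] by blast
    have "x \<noteq> \<one>" using x(2) subgroup.one_closed[OF sL[OF L]] by blast
    then have Mnt: "Mf L \<noteq> {\<one>}" using x(1) by blast
    have Mmin: "M = {\<one>} \<or> M = Mf L" if M: "subgroup M G" "M \<subseteq> Mf L" for M
    proof (cases "M = {\<one>}")
      case True then show ?thesis by simp
    next
      case False
      then obtain m where m: "m \<in> M" "m \<noteq> \<one>" using subgroup.one_closed[OF M(1)] by blast
      have "m \<notin> L"
      proof
        assume "m \<in> L"
        then have "m \<in> Mf L \<inter> L" using m M(2) by blast
        then show False using MiL[OF L] m(2) by blast
      qed
      then have nML: "\<not> M \<subseteq> L" using m by blast
      have "Mf L \<inter> L \<subseteq> M" using MiL[OF L] subgroup.one_closed[OF M(1)] by simp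
      then have "M = Mf L" using PI[OF sL[OF L] LA[OF L] N Ms MA M(1) _ M(2) nML] by blast
      then show ?thesis by simp
    qed
    show ?thesis by (rule prime_card_if_no_subgroups[OF Ms Mfin Mnt Mmin])
  qed
  have Minj: "L1 = L2" if "L1 \<in> Ls" "L2 \<in> Ls" "Mf L1 = Mf L2" for L1 L2
  proof (rule ccontr)
    assume "L1 \<noteq> L2"
    then have "Mf L1 \<subseteq> L2" using Msub that by blast
    then show False using Mnot[OF that(2)] that(3) by simp
  qed
  define Hs where "Hs = Mf ` Ls"
  have P1: "\<forall>H\<in>Hs. subgroup H G \<and> H \<subseteq> A \<and> G_invariant G H \<and> Factorial_Ring.prime (card H)"
  proof
    fix H assume "H \<in> Hs"
    then obtain L where L: "L \<in> Ls" "H = Mf L" unfolding Hs_def by blast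
    show "subgroup H G \<and> H \<subseteq> A \<and> G_invariant G H \<and> Factorial_Ring.prime (card H)"
      using Ms MA ginv_Ginv[OF Mcar Mg] Mprime[OF L(1)] L(2) by simp
  qed
  define S where "S = generate G (\<Union>Hs)"
  have UHA: "\<Union>Hs \<subseteq> A" unfolding Hs_def using MA by blast
  have SA: "S \<subseteq> A" unfolding S_def using generate_subgroup_incl[OF UHA subA] .
  have incS: "m \<in> S" if "L \<in> Ls" "m \<in> Mf L" for L m
  proof -
    have "m \<in> \<Union>Hs" unfolding Hs_def using that by blast
    then show ?thesis unfolding S_def by (rule generate.incl)
  qed
  have Ssub: "subgroup S G" unfolding S_def using generate_is_subgroup UHA Ac by blast
  have dens: "A \<subseteq> T closure_of S"
  proof
    fix x assume xA: "x \<in> A"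
    have xc: "x \<in> carrier G" using inA[OF xA] .
    show "x \<in> T closure_of S"
      unfolding in_closure_of
    proof (intro conjI allI impI)
      show "x \<in> topspace T" using xc top by simp
      fix W assume W: "x \<in> W \<and> openin T W"
      define Op where "Op = {z \<in> topspace T. x \<otimes> z \<in> W}"
      have Opo: "openin T Op" unfolding Op_def
        using openin_continuous_map_preimage[OF cm_lmult[OF xc]] W by blast
      have Op1: "\<one> \<in> Op" unfolding Op_def using W xc top by simp
      define U where "U = insert A (insert (topspace T - Op) Ls)"
      have Ucl: "\<forall>C\<in>U. closedin T C" unfolding U_def using cA Opo cL by blast
      have Uem: "\<Inter>U = {}"
      proof -
        have "\<Inter>U \<subseteq> (A \<inter> \<Inter>Ls) - Op" unfolding U_def by blast
        then have "\<Inter>U \<subseteq> {\<one>} - Op" using D by simp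
        then show ?thesis using Op1 by blast
      qed
      have "\<not> (\<forall>F. finite F \<and> F \<subseteq> U \<longrightarrow> \<Inter>F \<noteq> {})"
        using cpt[unfolded compact_space_fip] Ucl Uem by blast
      then obtain F0 where F0: "finite F0" "F0 \<subseteq> U" "\<Inter>F0 = {}" by blast
      define F where "F = F0 - {A, topspace T - Op}"
      have F: "finite F" "F \<subseteq> Ls" using F0 unfolding F_def U_def by auto
      have AFO: "A \<inter> \<Inter>F \<subseteq> Op"
      proof
        fix z assume z: "z \<in> A \<inter> \<Inter>F"
        show "z \<in> Op"
        proof (rule ccontr)
          assume "z \<notin> Op"
          moreover have "z \<in> topspace T" using z Ac top by auto
          ultimately have "z \<in> \<Inter>F0" using z unfolding F_def by blast
          then show False using F0(3) by blast
        qed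
      qed
      have "\<exists>y\<in>S. inv x \<otimes> y \<in> A \<and> (\<forall>L'\<in>F. inv x \<otimes> y \<in> L')"
        using F
      proof (induct F rule: finite_subset_induct')
        case empty
        have "\<one> \<in> S" unfolding S_def by (rule generate.one)
        moreover have "inv x \<otimes> \<one> \<in> A" using xc subgroup.m_inv_closed[OF subA xA] by simp
        ultimately show ?case by blast
      next
        case (insert L F)
        have LLs: "L \<in> Ls" using insert(2) .
        have FLs: "F \<subseteq> Ls" using insert(3) .
        have LF: "L \<notin> F" using insert(4) .
        obtain y where y: "y \<in> S" "inv x \<otimes> y \<in> A" "\<forall>L'\<in>F. inv x \<otimes> y \<in> L'" using insert(5) by blast
        have yA: "y \<in> A" using y(1) SA by blast
        have yc: "y \<in> carrier G" using inA[OF yA] .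
        have aA: "inv y \<otimes> x \<in> A" using subgroup.m_closed[OF subA subgroup.m_inv_closed[OF subA yA] xA] .
        obtain m l where ml: "m \<in> Mf L" "l \<in> L" "inv y \<otimes> x = m \<otimes> l" using Mdec[OF LLs] aA by blast
        have mc: "m \<in> carrier G" using ml(1) Mcar by blast
        have lc: "l \<in> carrier G" using ml(2) LA[OF LLs] Ac by blast
        have "inv x \<otimes> y = inv (inv y \<otimes> x)" using xc yc by (simp add: inv_mult_group)
        also have "\<dots> = inv l \<otimes> inv m" using ml(3) mc lc by (simp add: inv_mult_group)
        finally have e: "inv x \<otimes> y = inv l \<otimes> inv m" .
        have e0: "inv x \<otimes> (y \<otimes> m) = (inv x \<otimes> y) \<otimes> m" using xc yc mc by (simp add: m_assoc)
        also have "\<dots> = inv l" using e mc lc by (simp add: m_assoc)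
        finally have e2: "inv x \<otimes> (y \<otimes> m) = inv l" .
        have ymS: "y \<otimes> m \<in> S" using subgroup.m_closed[OF Ssub y(1) incS[OF LLs ml(1)]] .
        have r1: "inv x \<otimes> (y \<otimes> m) \<in> L" using e2 subgroup.m_inv_closed[OF sL[OF LLs] ml(2)] by simp
        have r2: "inv x \<otimes> (y \<otimes> m) \<in> A" using e2 subgroup.m_inv_closed[OF subA] ml(2) LA[OF LLs] by auto
        have r3: "inv x \<otimes> (y \<otimes> m) \<in> L'" if L': "L' \<in> F" for L'
        proof -
          have L'Ls: "L' \<in> Ls" using L' FLs by blast
          have "L' \<noteq> L" using L' LF by blast
          then have "m \<in> L'" using Msub[OF L'Ls] ml(1) by blast
          moreover have "inv x \<otimes> y \<in> L'" using y(3) L' by blast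
          ultimately have "(inv x \<otimes> y) \<otimes> m \<in> L'" using subgroup.m_closed[OF sL[OF L'Ls]] by blast
          then show ?thesis using e0 by simp
        qed
        have "inv x \<otimes> (y \<otimes> m) \<in> A \<and> (\<forall>L'\<in>insert L F. inv x \<otimes> (y \<otimes> m) \<in> L')"
          using r1 r2 r3 by blast
        then show ?case using ymS by blast
      qed
      then obtain y where y: "y \<in> S" "inv x \<otimes> y \<in> A \<inter> \<Inter>F" by blast
      then have "inv x \<otimes> y \<in> Op" using AFO by blast
      then have "x \<otimes> (inv x \<otimes> y) \<in> W" unfolding Op_def by blast
      moreover have "y \<in> carrier G" using y(1) SA Ac by blast
      ultimately have "y \<in> W" using xc by simp
      then show "\<exists>y. y \<in> S \<and> y \<in> W" using y(1) by blast
    qed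
  qed
  have closA: "T closure_of S = A"
    using closure_of_minimal[OF SA cA] dens by blast
  have others: "T closure_of generate G (\<Union>(Hs - {Mf L})) \<subseteq> A \<inter> L" if L: "L \<in> Ls" for L
  proof -
    have "\<Union>(Hs - {Mf L}) \<subseteq> A \<inter> L"
    proof
      fix z assume "z \<in> \<Union>(Hs - {Mf L})"
      then obtain L' where L': "L' \<in> Ls" "Mf L' \<noteq> Mf L" "z \<in> Mf L'" unfolding Hs_def by blast
      have "L' \<noteq> L" using L'(2) by blast
      then have "Mf L' \<subseteq> L" using Msub[OF L] by blast
      then show "z \<in> A \<inter> L" using L'(3) MA by blast
    qed
    moreover have "subgroup (A \<inter> L) G" using subgroups_Inter_pair[OF subA sL[OF L]] .
    ultimately have "generate G (\<Union>(Hs - {Mf L})) \<subseteq> A \<inter> L"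
      using generate_subgroup_incl by blast
    moreover have "closedin T (A \<inter> L)" using closedin_Int[OF cA cL[OF L]] .
    ultimately show ?thesis using closure_of_minimal by blast
  qed
  have one_in: "\<one> \<in> T closure_of generate G K" if "K \<subseteq> carrier G" for K
  proof -
    have "generate G K \<subseteq> carrier G" using generate_in_carrier[OF that] by blast
    then have "generate G K \<subseteq> topspace T" using top by simp
    then have "generate G K \<subseteq> T closure_of generate G K" by (rule closure_of_subset)
    then show ?thesis using generate.one by blast
  qed
  have P3: "(\<Inter>i\<in>Hs. T closure_of generate G (\<Union>j\<in>Hs - {i}. j)) = {\<one>}"
  proof
    show "(\<Inter>i\<in>Hs. T closure_of generate G (\<Union>j\<in>Hs - {i}. j)) \<subseteq> {\<one>}"
    proof
      fix z assume z: "z \<in> (\<Inter>i\<in>Hs. T closure_of generate G (\<Union>j\<in>Hs - {i}. j))"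
      have "z \<in> A \<inter> L" if L: "L \<in> Ls" for L
      proof -
        have "Mf L \<in> Hs" unfolding Hs_def using L by blast
        then have "z \<in> T closure_of generate G (\<Union>(Hs - {Mf L}))" using z by simp
        then show ?thesis using others[OF L] by blast
      qed
      then have zz: "\<And>L. L \<in> Ls \<Longrightarrow> z \<in> A \<and> z \<in> L" by blast
      obtain L0 where "L0 \<in> Ls" using Lne by blast
      then have "z \<in> A" using zz by blast
      moreover have "z \<in> \<Inter>Ls" using zz by blast
      ultimately have "z \<in> A \<inter> \<Inter>Ls" by blast
      then show "z \<in> {\<one>}" using D by simp
    qed
    show "{\<one>} \<subseteq> (\<Inter>i\<in>Hs. T closure_of generate G (\<Union>j\<in>Hs - {i}. j))"
    proof
      fix z assume "z \<in> {\<one>}"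
      then have z1: "z = \<one>" by simp
      have "\<one> \<in> T closure_of generate G (\<Union>(Hs - {i}))" for i
      proof -
        have "\<Union>(Hs - {i}) \<subseteq> carrier G" using UHA Ac by blast
        then show ?thesis by (rule one_in)
      qed
      then show "z \<in> (\<Inter>i\<in>Hs. T closure_of generate G (\<Union>j\<in>Hs - {i}. j))" using z1 by simp
    qed
  qed
  have P2: "\<forall>i\<in>Hs. closedin T i \<and> i \<lhd> G\<lparr>carrier := A\<rparr>"
  proof
    fix H assume "H \<in> Hs"
    then obtain L where L: "L \<in> Ls" "H = Mf L" unfolding Hs_def by blast
    show "closedin T H \<and> H \<lhd> G\<lparr>carrier := A\<rparr>" using Mc normal_in_A[OF Ms MA] L(2) by simp
  qed
  have "internal_cartesian_product G T A Hs (\<lambda>H. H)"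
    unfolding internal_cartesian_product_def
    using P2 P3 closA S_def by simp
  then show ?thesis using P1 by blast
qed

end

theorem lemma2p9:
  fixes G :: "('a, 'b) monoid_scheme" and T :: "'a topology" and A :: "'a set"
  assumes "profinite_C_group G T"
    and "A \<lhd> G" and "closedin T A"
    and "\<forall>x\<in>A. \<forall>y\<in>A. x \<otimes>\<^bsub>G\<^esub> y = y \<otimes>\<^bsub>G\<^esub> x"
    and "A \<noteq> {\<one>\<^bsub>G\<^esub>}"
  shows "\<exists>\<H>. (\<forall>H\<in>\<H>. subgroup H G \<and> H \<subseteq> A \<and> G_invariant G H \<and> Factorial_Ring.prime (card H))
           \<and> internal_cartesian_product G T A \<H> (\<lambda>H. H)"
proof -
  have pg: "profinite_group G T" using assms(1) unfolding profinite_C_group_def by blast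
  have cp: "\<And>H. closed_subgroup G T H \<Longrightarrow> \<exists>K. closed_subgroup G T K \<and> permutable_complement G H K"
    using assms(1) unfolding profinite_C_group_def by blast
  have abx: "\<And>x y. x \<in> A \<Longrightarrow> y \<in> A \<Longrightarrow> x \<otimes>\<^bsub>G\<^esub> y = y \<otimes>\<^bsub>G\<^esub> x" using assms(4) by blast
  interpret setting G T A
    by (rule setting.intro[OF ptg.intro[OF pg] setting_axioms.intro[OF cp assms(2) assms(3) abx]])
  show ?thesis by (rule main[OF assms(5)])
qed

end
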